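(* For $\ell=0,1,\ldots,N-1$ define $$\hat{\mathcal{K}}_\ell(p,q)=\prod_{m=1}^N\prod_{n=1}^{N-\ell}\Gamma\big(1-i(p_m-q_n)/\hbar\mu\big),\qquad p\in\mathbb{C}^N,\ q\in\mathbb{C}^{N-\ell}.$$ Then for every $k\in\{1,\ldots,N-\ell\}$, as identities of meromorphic functions, $$\hat A_{k,\rm nr}(p_1,\ldots,p_N)\hat{\mathcal{K}}_\ell(p,q)=\hat A_{-k,\rm nr}(q_1,\ldots,q_{N-\ell})\hat{\mathcal{K}}_\ell(p,q).$$
   Context: Fix $\hbar,\mu>0$; $\Gamma$ is Euler's gamma function. The operator $\exp(\mp i\hbar\mu\partial_{p_m})$ acts on meromorphic $f$ by $f(p)\mapsto f(p_1,\ldots,p_m\mp i\hbar\mu,\ldots)$. For $n$ variables and $k=1,\ldots,n$, $$\hat A_{\pm k,\rm nr}(p)=(\mp i)^{k(n-k)}\sum_{I\subset\{1,\ldots,n\},|I|=k}\ \prod_{m\in I,m'\notin I}\frac{\hbar\mu}{p_m-p_{m'}}\prod_{m\in I}\exp(\mp i\hbar\mu\partial_{p_m}).$$ *)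

theory Defs
  imports "HOL-Analysis.Analysis"
begin

text \<open>Points of C^n are functions nat => complex; only coordinates 1..n are used.
  The sign s is 1 for the operator A_{+k,nr} and -1 for A_{-k,nr}.\<close>

definition shift_set :: "nat set \<Rightarrow> complex \<Rightarrow> (nat \<Rightarrow> complex) \<Rightarrow> (nat \<Rightarrow> complex)" where
  "shift_set I c p = (\<lambda>j. if j \<in> I then p j + c else p j)"

definition A_nr :: "real \<Rightarrow> real \<Rightarrow> nat \<Rightarrow> complex \<Rightarrow> nat \<Rightarrow>
    ((nat \<Rightarrow> complex) \<Rightarrow> complex) \<Rightarrow> (nat \<Rightarrow> complex) \<Rightarrow> complex" where
  "A_nr hbar mu n s k f p =
     (- s * \<i>) ^ (k * (n - k)) *
     (\<Sum>I\<in>{I. I \<subseteq> {1..n} \<and> card I = k}.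
        (\<Prod>m\<in>I. \<Prod>m'\<in>{1..n} - I. complex_of_real (hbar * mu) / (p m - p m')) *
        f (shift_set I (- s * \<i> * complex_of_real (hbar * mu)) p))"

definition K_hat :: "real \<Rightarrow> real \<Rightarrow> nat \<Rightarrow> nat \<Rightarrow> (nat \<Rightarrow> complex) \<Rightarrow> (nat \<Rightarrow> complex) \<Rightarrow> complex" where
  "K_hat hbar mu N l p q =
     (\<Prod>m\<in>{1..N}. \<Prod>n\<in>{1..N-l}.
        Gamma (1 - \<i> * (p m - q n) / complex_of_real (hbar * mu)))"

end

theory Submission
  imports Defs "HOL-Computational_Algebra.Polynomial"
begin


definition Gf :: "'a set \<Rightarrow> ('a \<Rightarrow> complex) \<Rightarrow> 'a set \<Rightarrow> complex" where
  "Gf W w I = (\<Prod>i\<in>I. \<Prod>l\<in>W - I. 1 / (w i - w l))"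
definition Lam :: "'a set \<Rightarrow> ('a \<Rightarrow> complex) \<Rightarrow> 'a \<Rightarrow> complex" where
  "Lam W w i = (\<Prod>l\<in>W - {i}. 1 / (w i - w l))"
definition Lf :: "'a set \<Rightarrow> ('a \<Rightarrow> complex) \<Rightarrow> ('a \<Rightarrow> complex) \<Rightarrow> complex" where
  "Lf W w f = (\<Sum>i\<in>W. Lam W w i * f i)"

lemma Lf_add: "Lf W w (\<lambda>i. f i + g i) = Lf W w f + Lf W w g"
  by (simp add: Lf_def distrib_left sum.distrib)
lemma Lf_cmult: "Lf W w (\<lambda>i. c * f i) = c * Lf W w f"
  by (simp add: Lf_def sum_distrib_left algebra_simps)

lemma Lam_remove:
  assumes "finite W" "inj_on w W" "i \<in> W" "b \<in> W" "i \<noteq> b"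
  shows "Lam W w i = Lam (W - {b}) w i / (w i - w b)"
proof -
  have "W - {i} = insert b (W - {b} - {i})" using assms by auto
  then show ?thesis using assms unfolding Lam_def
    by (simp add: prod.insert field_simps)
qed

lemma Lstep:
  assumes "finite W" "inj_on w W" "b \<in> W"
  shows "Lf W w (\<lambda>i. (w i - w b) * f i) = Lf (W - {b}) w f"
proof -
  have "Lf W w (\<lambda>i. (w i - w b) * f i) = (\<Sum>i\<in>W - {b}. Lam W w i * ((w i - w b) * f i))"
    unfolding Lf_def using assms by (simp add: sum.remove)
  also have "\<dots> = (\<Sum>i\<in>W - {b}. Lam (W - {b}) w i * f i)"
  proof (rule sum.cong)
    fix i assume i: "i \<in> W - {b}"
    then have "w i \<noteq> w b" using assms by (auto dest: inj_onD)
    then show "Lam W w i * ((w i - w b) * f i) = Lam (W - {b}) w i * f i"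
      using Lam_remove[OF assms(1,2) _ assms(3), of i] i by (simp add: field_simps)
  qed simp
  finally show ?thesis unfolding Lf_def .
qed

lemma L1_aux: "card W = n \<Longrightarrow> finite W \<Longrightarrow> inj_on w W \<Longrightarrow> 2 \<le> n \<Longrightarrow> Lf W w (\<lambda>_. 1) = 0"
proof (induction n arbitrary: W rule: less_induct)
  case (less n)
  obtain a b where ab: "a \<in> W" "b \<in> W" "a \<noteq> b"
    using less.prems by (metis One_nat_def card.empty card_le_Suc0_iff_eq not_less_eq_eq numeral_2_eq_2 zero_less_Suc less_le_not_le)
  have wab: "w a \<noteq> w b" using ab less.prems by (auto dest: inj_onD)
  have e1: "Lf W w (\<lambda>i. (w i - w b) * 1) = Lf (W - {b}) w (\<lambda>_. 1)"
    by (rule Lstep) (use less.prems ab in auto)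
  have e2: "Lf W w (\<lambda>i. (w i - w a) * 1) = Lf (W - {a}) w (\<lambda>_. 1)"
    by (rule Lstep) (use less.prems ab in auto)
  have "Lf W w (\<lambda>i. (w i - w b) * 1) = Lf W w (\<lambda>i. (w a - w b) * 1 + (w i - w a) * 1)"
    by (simp add: algebra_simps)
  also have "\<dots> = (w a - w b) * Lf W w (\<lambda>_. 1) + Lf W w (\<lambda>i. (w i - w a) * 1)"
    by (simp only: Lf_add Lf_cmult)
  finally have key: "(w a - w b) * Lf W w (\<lambda>_. 1) = Lf (W - {b}) w (\<lambda>_. 1) - Lf (W - {a}) w (\<lambda>_. 1)"
    using e1 e2 by (simp add: eq_diff_eq)
  have "Lf (W - {b}) w (\<lambda>_. 1) = Lf (W - {a}) w (\<lambda>_. 1)"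
  proof (cases "n = 2")
    case True
    then have "W = {a, b}" using less.prems ab
      by (metis card_2_iff doubleton_eq_iff insertE singletonD)
    then show ?thesis using ab by (simp add: Lf_def Lam_def insert_Diff_if)
  next
    case False
    have "Lf (W - {b}) w (\<lambda>_. 1) = 0"
      by (rule less.IH[of "n - 1"]) (use less.prems ab False in \<open>auto intro: inj_on_subset\<close>)
    moreover have "Lf (W - {a}) w (\<lambda>_. 1) = 0"
      by (rule less.IH[of "n - 1"]) (use less.prems ab False in \<open>auto intro: inj_on_subset\<close>)
    ultimately show ?thesis by simp
  qed
  with key wab show ?case by simp
qed

lemma Lpoly:
  "finite W \<Longrightarrow> inj_on w W \<Longrightarrow> degree P + 2 \<le> card W \<Longrightarrow> Lf W w (\<lambda>i. poly P (w i)) = 0"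
proof (induction P arbitrary: W rule: pCons_induct)
  case 0
  then show ?case by (simp add: Lf_def)
next
  case (pCons a q)
  show ?case
  proof (cases "q = 0")
    case True
    then have "Lf W w (\<lambda>i. poly (pCons a q) (w i)) = a * Lf W w (\<lambda>_. 1)"
      using Lf_cmult[of W w a "\<lambda>_. 1"] by simp
    also have "\<dots> = 0" using L1_aux[OF refl pCons.prems(1,2)] pCons.prems(3) True by simp
    finally show ?thesis .
  next
    case False
    then have dg: "degree (pCons a q) = Suc (degree q)" by simp
    then obtain b where b: "b \<in> W" using pCons.prems by fastforce
    have "Lf W w (\<lambda>i. poly (pCons a q) (w i)) =
       Lf W w (\<lambda>i. a * 1 + ((w i - w b) * poly q (w i) + w b * poly q (w i)))"
      by (simp add: algebra_simps)
    also have "\<dots> = a * Lf W w (\<lambda>_. 1) + Lf (W - {b}) w (\<lambda>i. poly q (w i)) + w b * Lf W w (\<lambda>i. poly q (w i))"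
      by (simp only: Lf_add Lf_cmult Lstep[OF pCons.prems(1,2) b] add.assoc)
    also have "\<dots> = 0"
    proof -
      have "Lf W w (\<lambda>_. 1) = 0" using L1_aux[OF refl pCons.prems(1,2)] pCons.prems(3) dg by simp
      moreover have "Lf (W - {b}) w (\<lambda>i. poly q (w i)) = 0"
        by (rule pCons.IH) (use pCons.prems b dg in \<open>auto intro: inj_on_subset\<close>)
      moreover have "Lf W w (\<lambda>i. poly q (w i)) = 0"
        by (rule pCons.IH) (use pCons.prems b dg in auto)
      ultimately show ?thesis by simp
    qed
    finally show ?thesis .
  qed
qed



lemma G_insert:
  assumes W: "finite W" "inj_on w W" and I: "I \<subseteq> W" and i: "i \<in> W - I"
  shows "Gf W w (insert i I) = Gf W w I * Lam W w i * (\<Prod>l\<in>I. (w l - w i) * (w i - w l))"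
proof -
  have fI: "finite I" using W I finite_subset by blast
  have ne: "\<And>l. l \<in> I \<Longrightarrow> w l \<noteq> w i" using W I i by (metis DiffE inj_onD subsetD)
  have a: "(\<Prod>l\<in>W - insert i I. 1 / (w j - w l)) = (w j - w i) * (\<Prod>l\<in>W - I. 1 / (w j - w l))"
    if j: "j \<in> I" for j
  proof -
    have e: "W - I = insert i (W - insert i I)" using i by auto
    have "(\<Prod>l\<in>W - I. 1 / (w j - w l)) = 1 / (w j - w i) * (\<Prod>l\<in>W - insert i I. 1 / (w j - w l))"
      unfolding e by (rule prod.insert) (use W in auto)
    then show ?thesis using ne[OF j] by (simp add: field_simps)
  qed
  have b: "(\<Prod>l\<in>W - insert i I. 1 / (w i - w l)) = Lam W w i * (\<Prod>l\<in>I. (w i - w l))"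
  proof -
    have e2: "W - {i} = I \<union> (W - insert i I)" using i I by auto
    have "Lam W w i = (\<Prod>l\<in>I. 1 / (w i - w l)) * (\<Prod>l\<in>W - insert i I. 1 / (w i - w l))"
      unfolding Lam_def e2 by (rule prod.union_disjoint) (use W fI in auto)
    moreover have "(\<Prod>l\<in>I. 1 / (w i - w l)) * (\<Prod>l\<in>I. (w i - w l)) = 1"
    proof -
      have "(\<Prod>l\<in>I. 1 / (w i - w l)) * (\<Prod>l\<in>I. (w i - w l)) = (\<Prod>l\<in>I. 1 / (w i - w l) * (w i - w l))"
        by (rule prod.distrib[symmetric])
      also have "\<dots> = 1"
      proof (rule prod.neutral, rule ballI)
        fix l assume "l \<in> I"
        then have "w i - w l \<noteq> 0" using ne by force
        then show "1 / (w i - w l) * (w i - w l) = 1" by simp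
      qed
      finally show ?thesis .
    qed
    ultimately show ?thesis by (metis (no_types, lifting) mult.assoc mult.commute mult_1)
  qed
  have a': "(\<Prod>j\<in>I. \<Prod>l\<in>W - insert i I. 1 / (w j - w l)) = (\<Prod>j\<in>I. (w j - w i) * (\<Prod>l\<in>W - I. 1 / (w j - w l)))"
    by (rule prod.cong[OF refl a])
  have d1: "(\<Prod>j\<in>I. (w j - w i) * (\<Prod>l\<in>W - I. 1 / (w j - w l))) = (\<Prod>j\<in>I. (w j - w i)) * Gf W w I"
    unfolding Gf_def by (rule prod.distrib)
  have d2: "(\<Prod>l\<in>I. (w l - w i) * (w i - w l)) = (\<Prod>l\<in>I. (w l - w i)) * (\<Prod>l\<in>I. (w i - w l))"
    by (rule prod.distrib)
  have "Gf W w (insert i I) = (\<Prod>l\<in>W - insert i I. 1 / (w i - w l)) *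
      (\<Prod>j\<in>I. \<Prod>l\<in>W - insert i I. 1 / (w j - w l))"
    unfolding Gf_def by (rule prod.insert) (use fI i in auto)
  also have "\<dots> = Lam W w i * (\<Prod>l\<in>I. (w i - w l)) * ((\<Prod>j\<in>I. (w j - w i)) * Gf W w I)"
    unfolding b a' d1 ..
  also have "\<dots> = Gf W w I * Lam W w i * (\<Prod>l\<in>I. (w l - w i) * (w i - w l))"
    unfolding d2 by (simp only: mult_ac)
  finally show ?thesis .
qed

lemma sum_insert_zero:
  assumes W: "finite W" "inj_on w W" and I: "I \<subseteq> W" and c: "2 * card I + 2 \<le> card W"
  shows "(\<Sum>i\<in>W - I. Gf W w (insert i I)) = 0"
proof -
  define P where "P = (\<Prod>l\<in>I. [:w l, -1:] * [:- w l, 1:])"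
  have fI: "finite I" using W I finite_subset by blast
  have polyP: "poly P x = (\<Prod>l\<in>I. (w l - x) * (x - w l))" for x
    unfolding P_def poly_prod by (rule prod.cong) (auto simp: algebra_simps)
  have "degree P \<le> sum (degree \<circ> (\<lambda>l. [:w l, -1:] * [:- w l, 1:])) I"
    unfolding P_def by (rule degree_prod_sum_le[OF fI])
  also have "\<dots> = (\<Sum>l\<in>I. degree ([:w l, -1:] * [:- w l, 1:]))"
    by (simp only: o_def)
  also have "\<dots> \<le> (\<Sum>l\<in>I. 2)"
  proof (rule sum_mono)
    fix l show "degree ([:w l, -1:] * [:- w l, 1:]) \<le> 2"
      by (rule order.trans[OF degree_mult_le]) simp
  qed
  finally have dP: "degree P + 2 \<le> card W" using c by simp
  have "(\<Sum>i\<in>W - I. Gf W w (insert i I)) = (\<Sum>i\<in>W - I. Gf W w I * (Lam W w i * poly P (w i)))"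
    by (rule sum.cong) (auto simp: G_insert[OF W I] polyP)
  also have "\<dots> = (\<Sum>i\<in>W. Gf W w I * (Lam W w i * poly P (w i)))"
    by (rule sum.mono_neutral_left) (use W I fI in \<open>auto simp: polyP\<close>)
  also have "\<dots> = Gf W w I * Lf W w (\<lambda>i. poly P (w i))"
    by (simp add: Lf_def sum_distrib_left)
  also have "\<dots> = 0" using Lpoly[OF W dP] by simp
  finally show ?thesis .
qed

definition Fam :: "'a set \<Rightarrow> 'a set \<Rightarrow> nat \<Rightarrow> nat \<Rightarrow> 'a set set" where
  "Fam W U a b = {I. I \<subseteq> W \<and> card (I \<inter> U) = a \<and> card (I - U) = b}"
definition Sab :: "'a set \<Rightarrow> ('a \<Rightarrow> complex) \<Rightarrow> 'a set \<Rightarrow> nat \<Rightarrow> nat \<Rightarrow> complex" where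
  "Sab W w U a b = (\<Sum>I\<in>Fam W U a b. Gf W w I)"

lemma finite_Fam: "finite W \<Longrightarrow> finite (Fam W U a b)"
  by (rule finite_subset[of _ "Pow W"]) (auto simp: Fam_def)

lemma double_count:
  fixes G :: "'a set \<Rightarrow> complex"
  assumes W: "finite W" and X: "X \<subseteq> W"
  shows "(\<Sum>I\<in>Fam W X (Suc a) b. of_nat (Suc a) * G I) = (\<Sum>J\<in>Fam W X a b. \<Sum>i\<in>X - J. G (insert i J))"
proof -
  have fin: "\<And>I. I \<in> Fam W X c d \<Longrightarrow> finite I" for c d using W by (auto simp: Fam_def intro: finite_subset)
  have "(\<Sum>I\<in>Fam W X (Suc a) b. of_nat (Suc a) * G I) = (\<Sum>I\<in>Fam W X (Suc a) b. \<Sum>i\<in>I \<inter> X. G I)"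
    by (rule sum.cong) (auto simp: Fam_def)
  also have "\<dots> = (\<Sum>(I,i)\<in>Sigma (Fam W X (Suc a) b) (\<lambda>I. I \<inter> X). G I)"
    by (rule sum.Sigma) (use W fin finite_Fam in auto)
  also have "\<dots> = (\<Sum>(J,i)\<in>Sigma (Fam W X a b) (\<lambda>J. X - J). G (insert i J))"
  proof (rule sum.reindex_bij_witness[where i="\<lambda>(J,i). (insert i J, i)" and j="\<lambda>(I,i). (I - {i}, i)"])
    fix p assume p: "p \<in> Sigma (Fam W X (Suc a) b) (\<lambda>I. I \<inter> X)"
    obtain I i where pI: "p = (I, i)" by fastforce
    have I: "I \<in> Fam W X (Suc a) b" "i \<in> I" "i \<in> X" using p pI by auto
    have fI: "finite I" using fin I(1) .
    show "(case case p of (I, i) \<Rightarrow> (I - {i}, i) of (J, i) \<Rightarrow> (insert i J, i)) = p"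
      using pI I by auto
    have I2: "I \<subseteq> W" "card (I \<inter> X) = Suc a" "card (I - X) = b" using I(1) unfolding Fam_def by simp_all
    have e1: "(I - {i}) \<inter> X = (I \<inter> X) - {i}" and e2: "I - {i} - X = I - X" using I by auto
    have "card ((I - {i}) \<inter> X) = a" unfolding e1 using I I2 fI by (simp add: card_Diff_singleton)
    then have "I - {i} \<in> Fam W X a b" using I2 e2 unfolding Fam_def by auto
    then show "(case p of (I, i) \<Rightarrow> (I - {i}, i)) \<in> Sigma (Fam W X a b) (\<lambda>J. X - J)"
      using pI I by simp
    show "(case case p of (I, i) \<Rightarrow> (I - {i}, i) of (J, i) \<Rightarrow> G (insert i J)) = (case p of (I, i) \<Rightarrow> G I)"
      using pI I by (auto simp: insert_absorb)
  next
    fix p assume p: "p \<in> Sigma (Fam W X a b) (\<lambda>J. X - J)"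
    obtain J i where pJ: "p = (J, i)" by fastforce
    have J: "J \<in> Fam W X a b" "i \<notin> J" "i \<in> X" using p pJ by auto
    have fJ: "finite J" using fin J(1) .
    show "(case case p of (J, i) \<Rightarrow> (insert i J, i) of (I, i) \<Rightarrow> (I - {i}, i)) = p"
      using pJ J by auto
    have J2: "J \<subseteq> W" "card (J \<inter> X) = a" "card (J - X) = b" using J(1) unfolding Fam_def by simp_all
    have e1: "insert i J \<inter> X = insert i (J \<inter> X)" and e2: "insert i J - X = J - X" using J by auto
    have "card (insert i J \<inter> X) = Suc a" unfolding e1 using J J2 fJ by simp
    moreover have "insert i J \<subseteq> W" using J J2 X by auto
    ultimately have "insert i J \<in> Fam W X (Suc a) b" using J2 e2 unfolding Fam_def by simp
    then show "(case p of (J, i) \<Rightarrow> (insert i J, i)) \<in> Sigma (Fam W X (Suc a) b) (\<lambda>I. I \<inter> X)"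
      using pJ J by simp
  qed
  also have "\<dots> = (\<Sum>J\<in>Fam W X a b. \<Sum>i\<in>X - J. G (insert i J))"
    by (rule sum.Sigma[symmetric]) (use W fin finite_Fam X in \<open>auto intro: finite_subset\<close>)
  finally show ?thesis .
qed

lemma rec_step:
  assumes W: "finite W" "inj_on w W" and U: "U \<subseteq> W" and c: "2 * (a + b) + 2 \<le> card W"
  shows "of_nat (Suc a) * Sab W w U (Suc a) b + of_nat (Suc b) * Sab W w U a (Suc b) = 0"
proof -
  have fam: "Fam W (W - U) d c = Fam W U c d" for c d
  proof -
    show ?thesis unfolding Fam_def
    proof (rule Collect_cong)
      fix I
      show "(I \<subseteq> W \<and> card (I \<inter> (W - U)) = d \<and> card (I - (W - U)) = c) = (I \<subseteq> W \<and> card (I \<inter> U) = c \<and> card (I - U) = d)"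
      proof (cases "I \<subseteq> W")
        case True
        then have "I \<inter> (W - U) = I - U" "I - (W - U) = I \<inter> U" by auto
        then show ?thesis using True by auto
      next
        case False
        then show ?thesis by simp
      qed
    qed
  qed
  have 1: "of_nat (Suc a) * Sab W w U (Suc a) b = (\<Sum>J\<in>Fam W U a b. \<Sum>i\<in>U - J. Gf W w (insert i J))"
    using double_count[OF W(1) U, where a=a and b=b and G="Gf W w"] by (simp add: Sab_def sum_distrib_left)
  have 2: "of_nat (Suc b) * Sab W w U a (Suc b) = (\<Sum>J\<in>Fam W U a b. \<Sum>i\<in>(W - U) - J. Gf W w (insert i J))"
    using double_count[OF W(1), where X="W - U" and a=b and b=a and G="Gf W w"] fam by (simp add: Sab_def sum_distrib_left)
  have "(\<Sum>J\<in>Fam W U a b. \<Sum>i\<in>U - J. Gf W w (insert i J)) + (\<Sum>J\<in>Fam W U a b. \<Sum>i\<in>(W - U) - J. Gf W w (insert i J))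
      = (\<Sum>J\<in>Fam W U a b. \<Sum>i\<in>W - J. Gf W w (insert i J))"
  proof -
    have "(\<Sum>i\<in>U - J. Gf W w (insert i J)) + (\<Sum>i\<in>(W - U) - J. Gf W w (insert i J)) = (\<Sum>i\<in>W - J. Gf W w (insert i J))" for J
    proof -
      have "W - J = (U - J) \<union> ((W - U) - J)" using U by auto
      moreover have "(\<Sum>i\<in>U - J. Gf W w (insert i J)) + (\<Sum>i\<in>(W - U) - J. Gf W w (insert i J)) = (\<Sum>i\<in>(U - J) \<union> ((W - U) - J). Gf W w (insert i J))"
        by (rule sum.union_disjoint[symmetric]) (use W U in \<open>auto intro: finite_subset\<close>)
      ultimately show ?thesis by simp
    qed
    then show ?thesis by (simp add: sum.distrib[symmetric])
  qed
  also have "\<dots> = 0"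
  proof (rule sum.neutral, rule ballI)
    fix J assume J: "J \<in> Fam W U a b"
    then have "J \<subseteq> W" "finite J" using W by (auto simp: Fam_def intro: finite_subset)
    moreover have "card J = a + b" using J card_Int_Diff[OF \<open>finite J\<close>, of U] by (simp add: Fam_def)
    ultimately show "(\<Sum>i\<in>W - J. Gf W w (insert i J)) = 0"
      using sum_insert_zero[OF W] c by simp
  qed
  finally show ?thesis using 1 2 by simp
qed

lemma closed_form:
  assumes W: "finite W" "inj_on w W" and U: "U \<subseteq> W" and c: "2 * k \<le> card W"
  shows "a \<le> k \<Longrightarrow> Sab W w U a (k - a) = (-1) ^ a * of_nat (k choose a) * Sab W w U 0 k"
proof (induction a)
  case 0
  then show ?case by simp
next
  case (Suc a)
  define b where "b = k - Suc a"
  have k: "k = Suc (a + b)" using Suc.prems b_def by simp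
  have IH: "Sab W w U a (Suc b) = (-1) ^ a * of_nat (k choose a) * Sab W w U 0 k"
    using Suc k by (simp add: Suc_diff_le)
  have r: "of_nat (Suc a) * Sab W w U (Suc a) b = - (of_nat (Suc b) * Sab W w U a (Suc b))"
    using rec_step[OF W U, of a b] c k by (simp add: eq_neg_iff_add_eq_0)
  have bin: "(of_nat (Suc a) :: complex) * of_nat (k choose Suc a) = of_nat (Suc b) * of_nat (k choose a)"
    unfolding of_nat_mult[symmetric] k by (rule arg_cong[where f=of_nat], rule Suc_times_binomial_add)
  have "of_nat (Suc a) * Sab W w U (Suc a) b = - (of_nat (Suc b) * ((-1) ^ a * of_nat (k choose a) * Sab W w U 0 k))"
    by (simp only: r IH)
  also have "\<dots> = - ((of_nat (Suc b) * of_nat (k choose a)) * ((-1) ^ a * Sab W w U 0 k))"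
    by (simp only: mult_ac)
  also have "\<dots> = - ((of_nat (Suc a) * of_nat (k choose Suc a)) * ((-1) ^ a * Sab W w U 0 k))"
    by (simp only: bin)
  also have "\<dots> = of_nat (Suc a) * ((-1) ^ Suc a * of_nat (k choose Suc a) * Sab W w U 0 k)"
    by (simp only: power_Suc) (simp add: algebra_simps)
  finally have eq: "of_nat (Suc a) * Sab W w U (Suc a) b = of_nat (Suc a) * ((-1) ^ Suc a * of_nat (k choose Suc a) * Sab W w U 0 k)" .
  have nz: "(of_nat (Suc a) :: complex) \<noteq> 0" by (simp only: of_nat_eq_0_iff)
  have "Sab W w U (Suc a) b = (-1) ^ Suc a * of_nat (k choose Suc a) * Sab W w U 0 k"
    using mult_left_cancel[OF nz] eq by blast
  then show ?case by (simp add: b_def)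
qed

theorem abstract_identity:
  assumes W: "finite W" "inj_on w W" and U: "U \<subseteq> W" and c: "2 * k \<le> card W"
  shows "(\<Sum>I\<in>{I. I \<subseteq> U \<and> card I = k}. Gf W w I) = (-1) ^ k * (\<Sum>I\<in>{I. I \<subseteq> W - U \<and> card I = k}. Gf W w I)"
proof -
  have f1: "Fam W U k 0 = {I. I \<subseteq> U \<and> card I = k}"
  proof -
    have "I \<subseteq> W \<and> card (I \<inter> U) = k \<and> card (I - U) = 0 \<longleftrightarrow> I \<subseteq> U \<and> card I = k" for I
    proof
      assume h: "I \<subseteq> W \<and> card (I \<inter> U) = k \<and> card (I - U) = 0"
      then have "finite I" using W finite_subset by blast
      then have "I - U = {}" using h by simp
      then have "I \<subseteq> U" by blast
      then show "I \<subseteq> U \<and> card I = k" using h by (simp add: Int_absorb2)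
    next
      assume h: "I \<subseteq> U \<and> card I = k"
      have e1: "I \<inter> U = I" using h by auto
      have e2: "I - U = {}" using h by auto
      show "I \<subseteq> W \<and> card (I \<inter> U) = k \<and> card (I - U) = 0" unfolding e1 e2 using U h by auto
    qed
    then show ?thesis unfolding Fam_def by blast
  qed
  have f2: "Fam W U 0 k = {I. I \<subseteq> W - U \<and> card I = k}"
  proof -
    have "I \<subseteq> W \<and> card (I \<inter> U) = 0 \<and> card (I - U) = k \<longleftrightarrow> I \<subseteq> W - U \<and> card I = k" for I
    proof
      assume h: "I \<subseteq> W \<and> card (I \<inter> U) = 0 \<and> card (I - U) = k"
      then have "finite I" using W finite_subset by blast
      then have "I \<inter> U = {}" using h by simp
      then have "I - U = I" by blast
      then show "I \<subseteq> W - U \<and> card I = k" using h by auto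
    next
      assume h: "I \<subseteq> W - U \<and> card I = k"
      then have "I \<inter> U = {}" "I - U = I" by auto
      then show "I \<subseteq> W \<and> card (I \<inter> U) = 0 \<and> card (I - U) = k" using h by auto
    qed
    then show ?thesis unfolding Fam_def by blast
  qed
  show ?thesis using closed_form[OF W U c, of k] f1 f2 by (simp add: Sab_def)
qed



lemma Gamma_shift:
  fixes x :: complex assumes "x \<notin> \<int>"
  shows "Gamma (x - 1) = Gamma x / (x - 1)"
proof -
  have nz: "x - 1 \<notin> \<int>\<^sub>\<le>\<^sub>0"
  proof
    assume "x - 1 \<in> \<int>\<^sub>\<le>\<^sub>0"
    then have "x - 1 \<in> \<int>" using nonpos_Ints_subset_Ints by blast
    then have "x - 1 + 1 \<in> \<int>" by (intro Ints_add) auto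
    then show False using assms by simp
  qed
  have ne: "x - 1 \<noteq> 0"
  proof
    assume "x - 1 = 0" then have "x = 1" by simp
    then show False using assms by simp
  qed
  have "Gamma x = (x - 1) * Gamma (x - 1)" using Gamma_plus1[OF nz] by simp
  then show ?thesis using ne by (simp add: field_simps)
qed

lemma prod_if_restrict:
  fixes P :: "nat \<Rightarrow> complex"
  assumes "finite A" "I \<subseteq> A"
  shows "(\<Prod>m\<in>A. if m \<in> I then P m else 1) = (\<Prod>m\<in>I. P m)"
  using prod.inter_restrict[OF assms(1), of P I] assms(2) by (simp add: Int_absorb1)

lemma K_shift_p:
  assumes hm: "hbar > 0" "mu > 0" and I: "I \<subseteq> {1..N}"
    and nz: "\<And>m n. m \<in> {1..N} \<Longrightarrow> n \<in> {1..N - l} \<Longrightarrow>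
           1 - \<i> * (p m - q n) / complex_of_real (hbar * mu) \<notin> \<int>"
  shows "K_hat hbar mu N l (shift_set I (- 1 * \<i> * complex_of_real (hbar * mu)) p) q
     = K_hat hbar mu N l p q * (\<Prod>m\<in>I. \<Prod>n\<in>{1..N - l}. \<i> * complex_of_real (hbar * mu) / (p m - q n))"
proof -
  define c where "c = complex_of_real (hbar * mu)"
  have c0: "c \<noteq> 0" using hm unfolding c_def by simp
  have pt: "Gamma (1 - \<i> * (shift_set I (- 1 * \<i> * c) p m - q n) / c)
      = Gamma (1 - \<i> * (p m - q n) / c) * (if m \<in> I then \<i> * c / (p m - q n) else 1)"
    if m: "m \<in> {1..N}" and n: "n \<in> {1..N - l}" for m n
  proof (cases "m \<in> I")
    case True
    define x where "x = 1 - \<i> * (p m - q n) / c"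
    have xz: "x \<notin> \<int>" using nz[OF m n] unfolding x_def c_def .
    have pq: "p m - q n \<noteq> 0" using xz unfolding x_def by auto
    have e: "1 - \<i> * (shift_set I (- 1 * \<i> * c) p m - q n) / c = x - 1"
      using True c0 unfolding shift_set_def x_def by (simp add: field_simps)
    have inv: "1 / (x - 1) = \<i> * c / (p m - q n)"
      unfolding x_def using c0 pq by (simp add: field_simps)
    have "Gamma x / (x - 1) = Gamma x * (1 / (x - 1))" by simp
    then have g: "Gamma (x - 1) = Gamma x * (\<i> * c / (p m - q n))"
      using Gamma_shift[OF xz] inv by simp
    show ?thesis unfolding e g using True by (simp add: x_def)
  next
    case False
    then show ?thesis unfolding shift_set_def by simp
  qed
  have "K_hat hbar mu N l (shift_set I (- 1 * \<i> * c) p) q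
      = (\<Prod>m\<in>{1..N}. \<Prod>n\<in>{1..N - l}. Gamma (1 - \<i> * (p m - q n) / c) * (if m \<in> I then \<i> * c / (p m - q n) else 1))"
    unfolding K_hat_def c_def[symmetric] by (intro prod.cong refl) (use pt in auto)
  also have "\<dots> = K_hat hbar mu N l p q * (\<Prod>m\<in>{1..N}. \<Prod>n\<in>{1..N - l}. (if m \<in> I then \<i> * c / (p m - q n) else 1))"
    unfolding K_hat_def c_def[symmetric] by (simp add: prod.distrib)
  also have "(\<Prod>m\<in>{1..N}. \<Prod>n\<in>{1..N - l}. (if m \<in> I then \<i> * c / (p m - q n) else 1))
      = (\<Prod>m\<in>{1..N}. if m \<in> I then (\<Prod>n\<in>{1..N - l}. \<i> * c / (p m - q n)) else 1)"
    by (intro prod.cong refl) simp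
  also have "\<dots> = (\<Prod>m\<in>I. \<Prod>n\<in>{1..N - l}. \<i> * c / (p m - q n))"
    by (rule prod_if_restrict) (use I in auto)
  finally show ?thesis unfolding c_def .
qed

lemma K_shift_q:
  assumes hm: "hbar > 0" "mu > 0" and J: "J \<subseteq> {1..N - l}"
    and nz: "\<And>m n. m \<in> {1..N} \<Longrightarrow> n \<in> {1..N - l} \<Longrightarrow>
           1 - \<i> * (p m - q n) / complex_of_real (hbar * mu) \<notin> \<int>"
  shows "K_hat hbar mu N l p (shift_set J (- (- 1) * \<i> * complex_of_real (hbar * mu)) q)
     = K_hat hbar mu N l p q * (\<Prod>n\<in>J. \<Prod>m\<in>{1..N}. \<i> * complex_of_real (hbar * mu) / (p m - q n))"
proof -
  define c where "c = complex_of_real (hbar * mu)"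
  have c0: "c \<noteq> 0" using hm unfolding c_def by simp
  have pt: "Gamma (1 - \<i> * (p m - shift_set J (- (- 1) * \<i> * c) q n) / c)
      = Gamma (1 - \<i> * (p m - q n) / c) * (if n \<in> J then \<i> * c / (p m - q n) else 1)"
    if m: "m \<in> {1..N}" and n: "n \<in> {1..N - l}" for m n
  proof (cases "n \<in> J")
    case True
    define x where "x = 1 - \<i> * (p m - q n) / c"
    have xz: "x \<notin> \<int>" using nz[OF m n] unfolding x_def c_def .
    have pq: "p m - q n \<noteq> 0" using xz unfolding x_def by auto
    have e: "1 - \<i> * (p m - shift_set J (- (- 1) * \<i> * c) q n) / c = x - 1"
      using True c0 unfolding shift_set_def x_def by (simp add: field_simps)
    have inv: "1 / (x - 1) = \<i> * c / (p m - q n)"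
      unfolding x_def using c0 pq by (simp add: field_simps)
    have "Gamma x / (x - 1) = Gamma x * (1 / (x - 1))" by simp
    then have g: "Gamma (x - 1) = Gamma x * (\<i> * c / (p m - q n))"
      using Gamma_shift[OF xz] inv by simp
    show ?thesis unfolding e g using True by (simp add: x_def)
  next
    case False
    then show ?thesis unfolding shift_set_def by simp
  qed
  have "K_hat hbar mu N l p (shift_set J (- (- 1) * \<i> * c) q)
      = (\<Prod>m\<in>{1..N}. \<Prod>n\<in>{1..N - l}. Gamma (1 - \<i> * (p m - q n) / c) * (if n \<in> J then \<i> * c / (p m - q n) else 1))"
    unfolding K_hat_def c_def[symmetric] by (intro prod.cong refl) (use pt in auto)
  also have "\<dots> = K_hat hbar mu N l p q * (\<Prod>m\<in>{1..N}. \<Prod>n\<in>{1..N - l}. (if n \<in> J then \<i> * c / (p m - q n) else 1))"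
    unfolding K_hat_def c_def[symmetric] by (simp add: prod.distrib)
  also have "(\<Prod>m\<in>{1..N}. \<Prod>n\<in>{1..N - l}. (if n \<in> J then \<i> * c / (p m - q n) else 1))
      = (\<Prod>m\<in>{1..N}. \<Prod>n\<in>J. \<i> * c / (p m - q n))"
    by (intro prod.cong refl prod_if_restrict) (use J in auto)
  also have "\<dots> = (\<Prod>n\<in>J. \<Prod>m\<in>{1..N}. \<i> * c / (p m - q n))"
    by (rule prod.swap)
  finally show ?thesis unfolding c_def .
qed



definition wmap :: "(nat \<Rightarrow> complex) \<Rightarrow> (nat \<Rightarrow> complex) \<Rightarrow> complex \<Rightarrow> nat + nat \<Rightarrow> complex" where
  "wmap p q c x = (case x of Inl m \<Rightarrow> \<i> * p m / c | Inr n \<Rightarrow> \<i> * q n / c)"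

lemma inv_w: "c \<noteq> 0 \<Longrightarrow> 1 / (\<i> * a / c - \<i> * b / c) = - (\<i> * c / (a - b))"
  by (cases "a = b") (auto simp: field_simps)

lemma Gf_Inl:
  fixes N M :: nat and w :: "nat + nat \<Rightarrow> complex"
  assumes I: "I \<subseteq> {1..N}"
  shows "Gf (Inl ` {1..N} \<union> Inr ` {1..M}) w (Inl ` I) =
    (\<Prod>m\<in>I. (\<Prod>m'\<in>{1..N} - I. 1 / (w (Inl m) - w (Inl m'))) * (\<Prod>n\<in>{1..M}. 1 / (w (Inl m) - w (Inr n))))"
proof -
  have e: "(Inl ` {1..N} \<union> Inr ` {1..M}) - Inl ` I = Inl ` ({1..N} - I) \<union> Inr ` {1..M}" using I by auto
  have "Gf (Inl ` {1..N} \<union> Inr ` {1..M}) w (Inl ` I) =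
      (\<Prod>m\<in>I. \<Prod>y\<in>Inl ` ({1..N} - I) \<union> Inr ` {1..M}. 1 / (w (Inl m) - w y))"
    unfolding Gf_def e by (simp add: prod.reindex)
  also have "\<dots> = (\<Prod>m\<in>I. (\<Prod>y\<in>Inl ` ({1..N} - I). 1 / (w (Inl m) - w y)) * (\<Prod>y\<in>Inr ` {1..M}. 1 / (w (Inl m) - w y)))"
    by (intro prod.cong refl prod.union_disjoint) (auto intro: finite_imageI)
  also have "\<dots> = (\<Prod>m\<in>I. (\<Prod>m'\<in>{1..N} - I. 1 / (w (Inl m) - w (Inl m'))) * (\<Prod>n\<in>{1..M}. 1 / (w (Inl m) - w (Inr n))))"
    by (simp add: prod.reindex)
  finally show ?thesis .
qed

lemma Gf_Inr:
  fixes N M :: nat and w :: "nat + nat \<Rightarrow> complex"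
  assumes J: "J \<subseteq> {1..M}"
  shows "Gf (Inl ` {1..N} \<union> Inr ` {1..M}) w (Inr ` J) =
    (\<Prod>n\<in>J. (\<Prod>m\<in>{1..N}. 1 / (w (Inr n) - w (Inl m))) * (\<Prod>n'\<in>{1..M} - J. 1 / (w (Inr n) - w (Inr n'))))"
proof -
  have e: "(Inl ` {1..N} \<union> Inr ` {1..M}) - Inr ` J = Inl ` {1..N} \<union> Inr ` ({1..M} - J)" using J by auto
  have "Gf (Inl ` {1..N} \<union> Inr ` {1..M}) w (Inr ` J) =
      (\<Prod>n\<in>J. \<Prod>y\<in>Inl ` {1..N} \<union> Inr ` ({1..M} - J). 1 / (w (Inr n) - w y))"
    unfolding Gf_def e by (simp add: prod.reindex)
  also have "\<dots> = (\<Prod>n\<in>J. (\<Prod>y\<in>Inl ` {1..N}. 1 / (w (Inr n) - w y)) * (\<Prod>y\<in>Inr ` ({1..M} - J). 1 / (w (Inr n) - w y)))"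
    by (intro prod.cong refl prod.union_disjoint) (auto intro: finite_imageI)
  also have "\<dots> = (\<Prod>n\<in>J. (\<Prod>m\<in>{1..N}. 1 / (w (Inr n) - w (Inl m))) * (\<Prod>n'\<in>{1..M} - J. 1 / (w (Inr n) - w (Inr n'))))"
    by (simp add: prod.reindex)
  finally show ?thesis .
qed

lemma neg1_sq: "((-1::complex) ^ n) * (-1) ^ n = 1"
  by (simp flip: power_mult_distrib)

lemma termL:
  assumes hm: "hbar > 0" "mu > 0" and I: "I \<subseteq> {1..N}" "card I = k"
    and nz: "\<And>m n. m \<in> {1..N} \<Longrightarrow> n \<in> {1..N - l} \<Longrightarrow>
           1 - \<i> * (p m - q n) / complex_of_real (hbar * mu) \<notin> \<int>"
  shows "(- 1 * \<i>) ^ (k * (N - k)) *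
     ((\<Prod>m\<in>I. \<Prod>m'\<in>{1..N} - I. complex_of_real (hbar * mu) / (p m - p m')) *
      K_hat hbar mu N l (shift_set I (- 1 * \<i> * complex_of_real (hbar * mu)) p) q)
   = K_hat hbar mu N l p q * (-1) ^ (k * (N - l)) *
     Gf (Inl ` {1..N} \<union> Inr ` {1..N - l}) (wmap p q (complex_of_real (hbar * mu))) (Inl ` I)"
proof -
  define c where "c = complex_of_real (hbar * mu)"
  have c0: "c \<noteq> 0" using hm unfolding c_def by simp
  have fI: "finite I" using I finite_subset by blast
  have cd: "card ({1..N} - I) = N - k" using I by (simp add: card_Diff_subset fI)
  have P1: "(- 1 * \<i>) ^ (k * (N - k)) = (\<Prod>m\<in>I. \<Prod>m'\<in>{1..N} - I. - \<i>)"
    using I cd by (simp add: power_mult) (metis power_mult mult.commute)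
  have P2: "(-1::complex) ^ (k * (N - l)) = (\<Prod>m\<in>I. \<Prod>n\<in>{1..N - l}. - 1)"
    using I by (simp add: power_mult) (metis power_mult mult.commute)
  let ?w = "wmap p q c"
  have "Gf (Inl ` {1..N} \<union> Inr ` {1..N - l}) ?w (Inl ` I) =
     (\<Prod>m\<in>I. (\<Prod>m'\<in>{1..N} - I. (- \<i>) * (c / (p m - p m'))) * (\<Prod>n\<in>{1..N - l}. (- 1) * (\<i> * c / (p m - q n))))"
    unfolding Gf_Inl[OF I(1)] by (intro prod.cong refl arg_cong2[where f="(*)"]) (auto simp: wmap_def inv_w[OF c0])
  also have "\<dots> = (\<Prod>m\<in>I. \<Prod>m'\<in>{1..N} - I. - \<i>) * (\<Prod>m\<in>I. \<Prod>m'\<in>{1..N} - I. c / (p m - p m')) *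
       ((\<Prod>m\<in>I. \<Prod>n\<in>{1..N - l}. - 1) * (\<Prod>m\<in>I. \<Prod>n\<in>{1..N - l}. \<i> * c / (p m - q n)))"
    by (simp only: prod.distrib)
  finally have G: "Gf (Inl ` {1..N} \<union> Inr ` {1..N - l}) ?w (Inl ` I) = \<dots>" .
  have Ks: "K_hat hbar mu N l (shift_set I (- 1 * \<i> * c) p) q
     = K_hat hbar mu N l p q * (\<Prod>m\<in>I. \<Prod>n\<in>{1..N - l}. \<i> * c / (p m - q n))"
    using K_shift_p[OF hm I(1) nz] unfolding c_def .
  define A where "A = (\<Prod>m\<in>I. \<Prod>m'\<in>{1..N} - I. - \<i>)"
  define X where "X = (\<Prod>m\<in>I. \<Prod>m'\<in>{1..N} - I. c / (p m - p m'))"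
  define Y where "Y = (\<Prod>m\<in>I. \<Prod>n\<in>{1..N - l}. \<i> * c / (p m - q n))"
  define s where "s = (-1::complex) ^ (k * (N - l))"
  define K where "K = K_hat hbar mu N l p q"
  have "A * (X * (K * Y)) = (s * s) * (A * (X * (K * Y)))" using neg1_sq unfolding s_def by simp
  also have "\<dots> = K * s * (A * X * (s * Y))" by (simp only: mult_ac)
  finally have fin: "A * (X * (K * Y)) = K * s * (A * X * (s * Y))" .
  show ?thesis
    unfolding c_def[symmetric] Ks G P1 P2[symmetric]
    using fin unfolding A_def X_def Y_def s_def K_def .
qed

lemma inv_w2: "c \<noteq> 0 \<Longrightarrow> 1 / (\<i> * b / c - \<i> * a / c) = \<i> * c / (a - b)"
  by (cases "a = b") (auto simp: field_simps)

lemma termR: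
  assumes hm: "hbar > 0" "mu > 0" and J: "J \<subseteq> {1..N - l}" "card J = k"
    and nz: "\<And>m n. m \<in> {1..N} \<Longrightarrow> n \<in> {1..N - l} \<Longrightarrow>
           1 - \<i> * (p m - q n) / complex_of_real (hbar * mu) \<notin> \<int>"
  shows "(- (- 1) * \<i>) ^ (k * (N - l - k)) *
     ((\<Prod>n\<in>J. \<Prod>n'\<in>{1..N - l} - J. complex_of_real (hbar * mu) / (q n - q n')) *
      K_hat hbar mu N l p (shift_set J (- (- 1) * \<i> * complex_of_real (hbar * mu)) q))
   = K_hat hbar mu N l p q * (-1) ^ (k * (N - l - k)) *
     Gf (Inl ` {1..N} \<union> Inr ` {1..N - l}) (wmap p q (complex_of_real (hbar * mu))) (Inr ` J)"
proof -
  define c where "c = complex_of_real (hbar * mu)"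
  have c0: "c \<noteq> 0" using hm unfolding c_def by simp
  have fJ: "finite J" using J finite_subset by blast
  have cd: "card ({1..N - l} - J) = N - l - k" using J by (simp add: card_Diff_subset fJ)
  have P1: "(- (- 1) * \<i>) ^ (k * (N - l - k)) = (\<Prod>n\<in>J. \<Prod>n'\<in>{1..N - l} - J. \<i>)"
    using J cd by (simp add: power_mult) (metis power_mult mult.commute)
  have P2: "(-1::complex) ^ (k * (N - l - k)) = (\<Prod>n\<in>J. \<Prod>n'\<in>{1..N - l} - J. - 1)"
    using J cd by (simp add: power_mult) (metis power_mult mult.commute)
  let ?w = "wmap p q c"
  have "Gf (Inl ` {1..N} \<union> Inr ` {1..N - l}) ?w (Inr ` J) =
     (\<Prod>n\<in>J. (\<Prod>m\<in>{1..N}. \<i> * c / (p m - q n)) * (\<Prod>n'\<in>{1..N - l} - J. (- 1) * (\<i> * (c / (q n - q n')))))"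
    unfolding Gf_Inr[OF J(1)] by (intro prod.cong refl arg_cong2[where f="(*)"]) (auto simp: wmap_def inv_w2[OF c0] inv_w[OF c0] minus_divide_right)
  also have "\<dots> = (\<Prod>n\<in>J. \<Prod>m\<in>{1..N}. \<i> * c / (p m - q n)) *
       ((\<Prod>n\<in>J. \<Prod>n'\<in>{1..N - l} - J. - 1) * ((\<Prod>n\<in>J. \<Prod>n'\<in>{1..N - l} - J. \<i>) * (\<Prod>n\<in>J. \<Prod>n'\<in>{1..N - l} - J. c / (q n - q n'))))"
    by (simp only: prod.distrib)
  finally have G: "Gf (Inl ` {1..N} \<union> Inr ` {1..N - l}) ?w (Inr ` J) = \<dots>" .
  have Ks: "K_hat hbar mu N l p (shift_set J (- (- 1) * \<i> * c) q)
     = K_hat hbar mu N l p q * (\<Prod>n\<in>J. \<Prod>m\<in>{1..N}. \<i> * c / (p m - q n))"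
    using K_shift_q[OF hm J(1) nz] unfolding c_def .
  define A where "A = (\<Prod>n\<in>J. \<Prod>n'\<in>{1..N - l} - J. \<i>)"
  define X where "X = (\<Prod>n\<in>J. \<Prod>n'\<in>{1..N - l} - J. c / (q n - q n'))"
  define Y where "Y = (\<Prod>n\<in>J. \<Prod>m\<in>{1..N}. \<i> * c / (p m - q n))"
  define s where "s = (-1::complex) ^ (k * (N - l - k))"
  define K where "K = K_hat hbar mu N l p q"
  have "A * (X * (K * Y)) = (s * s) * (A * (X * (K * Y)))" using neg1_sq unfolding s_def by simp
  also have "\<dots> = K * s * (Y * (s * (A * X)))" by (simp only: mult_ac)
  finally have fin: "A * (X * (K * Y)) = K * s * (Y * (s * (A * X)))" .
  show ?thesis
    unfolding c_def[symmetric] Ks G P1 P2[symmetric]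
    using fin unfolding A_def X_def Y_def s_def K_def .
qed



lemma reindex_image_sets:
  assumes f: "inj f"
  shows "(\<Sum>I\<in>{I. I \<subseteq> f ` A \<and> card I = k}. g I) = (\<Sum>I\<in>{I. I \<subseteq> A \<and> card I = k}. g (f ` I))"
proof (rule sum.reindex_bij_witness[where i="\<lambda>I. f ` I" and j="\<lambda>I. f -` I"])
  fix a assume a: "a \<in> {I. I \<subseteq> f ` A \<and> card I = k}"
  show e: "f ` (f -` a) = a" using a by auto
  have "f -` a \<subseteq> A" using a f by (auto dest: injD)
  moreover have "card (f -` a) = k"
    using card_image[OF inj_on_subset[OF f subset_UNIV, of "f -` a"]] e a by simp
  ultimately show "f -` a \<in> {I. I \<subseteq> A \<and> card I = k}" by simp
  show "g (f ` (f -` a)) = g a" using e by simp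
next
  fix b assume b: "b \<in> {I. I \<subseteq> A \<and> card I = k}"
  show "f -` (f ` b) = b" using f by (rule inj_vimage_image_eq)
  show "f ` b \<in> {I. I \<subseteq> f ` A \<and> card I = k}"
    using b card_image[OF inj_on_subset[OF f subset_UNIV, of b]] by auto
qed

lemma sign_lemma: "k \<le> M \<Longrightarrow> (-1::complex) ^ (k * M) * (-1) ^ k = (-1) ^ (k * (M - k))"
proof -
  assume "k \<le> M"
  then obtain j where M: "M = k + j" using le_Suc_ex by blast
  have e: "k * M + k = k * j + k * Suc k" unfolding M by (simp add: algebra_simps)
  have "(-1::complex) ^ (k * M) * (-1) ^ k = (-1) ^ (k * M + k)" by (simp add: power_add)
  also have "\<dots> = (-1) ^ (k * j) * (-1) ^ (k * Suc k)" unfolding e by (simp only: power_add)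
  also have "(-1::complex) ^ (k * Suc k) = 1" by simp
  finally show ?thesis using M by simp
qed

lemma inj_w:
  fixes p q :: "nat \<Rightarrow> complex" and N M :: nat
  assumes c0: "c \<noteq> 0" and ip: "inj_on p {1..N}" and iq: "inj_on q {1..M}"
    and pq: "\<And>m n. m \<in> {1..N} \<Longrightarrow> n \<in> {1..M} \<Longrightarrow> p m \<noteq> q n"
  shows "inj_on (wmap p q c) (Inl ` {1..N} \<union> Inr ` {1..M})"
proof (rule inj_onI)
  fix x y assume x: "x \<in> Inl ` {1..N} \<union> Inr ` {1..M}" and y: "y \<in> Inl ` {1..N} \<union> Inr ` {1..M}"
    and e: "wmap p q c x = wmap p q c y"
  have canc: "\<And>a b. \<i> * a / c = \<i> * b / c \<Longrightarrow> a = b" using c0 by simp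
  show "x = y"
  proof (cases x)
    case xm: (Inl m)
    then have m: "m \<in> {1..N}" using x by auto
    show ?thesis
    proof (cases y)
      case ym: (Inl m')
      then have m': "m' \<in> {1..N}" using y by auto
      have "\<i> * p m / c = \<i> * p m' / c" using e unfolding xm ym wmap_def by simp
      then have "p m = p m'" by (rule canc)
      then show ?thesis using ip m m' xm ym by (auto dest: inj_onD)
    next
      case yn: (Inr n)
      then have n: "n \<in> {1..M}" using y by auto
      have "\<i> * p m / c = \<i> * q n / c" using e unfolding xm yn wmap_def by simp
      then have "p m = q n" by (rule canc)
      then show ?thesis using pq[OF m n] by blast
    qed
  next
    case xn: (Inr n)
    then have n: "n \<in> {1..M}" using x by auto
    show ?thesis
    proof (cases y)
      case ym: (Inl m)
      then have m: "m \<in> {1..N}" using y by auto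
      have "\<i> * q n / c = \<i> * p m / c" using e unfolding xn ym wmap_def by simp
      then have "q n = p m" by (rule canc)
      then show ?thesis using pq[OF m n] by simp
    next
      case yn: (Inr n')
      then have n': "n' \<in> {1..M}" using y by auto
      have "\<i> * q n / c = \<i> * q n' / c" using e unfolding xn yn wmap_def by simp
      then have "q n = q n'" by (rule canc)
      then show ?thesis using iq n n' xn yn by (auto dest: inj_onD)
    qed
  qed
qed

theorem theorem4p12:
  fixes hbar mu :: real and N l k :: nat and p q :: "nat \<Rightarrow> complex"
  assumes "hbar > 0" and "mu > 0" and "l < N"
    and "1 \<le> k" and "k \<le> N - l"
    and "inj_on p {1..N}" and "inj_on q {1..N - l}"
    and "\<And>m n. m \<in> {1..N} \<Longrightarrow> n \<in> {1..N - l} \<Longrightarrow>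
           1 - \<i> * (p m - q n) / complex_of_real (hbar * mu) \<notin> \<int>"
  shows "A_nr hbar mu N 1 k (\<lambda>p'. K_hat hbar mu N l p' q) p
       = A_nr hbar mu (N - l) (-1) k (\<lambda>q'. K_hat hbar mu N l p q') q"
proof -
  note hm = assms(1,2) and nz = assms(8)
  define c where "c = complex_of_real (hbar * mu)"
  have c0: "c \<noteq> 0" using hm unfolding c_def by simp
  define W where "W = Inl ` {1..N} \<union> Inr ` {1..N - l}"
  define U :: "(nat + nat) set" where "U = Inl ` {1..N}"
  define w where "w = wmap p q c"
  define K where "K = K_hat hbar mu N l p q"
  have pq: "p m \<noteq> q n" if "m \<in> {1..N}" "n \<in> {1..N - l}" for m n
  proof
    assume "p m = q n"
    then show False using nz[OF that] by simp
  qed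
  have inj: "inj_on w W" unfolding w_def W_def using inj_w[OF c0 assms(6,7) pq] .
  have finW: "finite W" unfolding W_def by simp
  have UW: "U \<subseteq> W" unfolding U_def W_def by auto
  have WU: "W - U = Inr ` {1..N - l}" unfolding U_def W_def by auto
  have cardW: "card W = N + (N - l)"
    unfolding W_def by (subst card_Un_disjoint) (auto simp: card_image)
  have c2: "2 * k \<le> card W" using cardW assms(3,5) by simp
  have abs: "(\<Sum>I\<in>{I. I \<subseteq> U \<and> card I = k}. Gf W w I) = (-1) ^ k * (\<Sum>I\<in>{I. I \<subseteq> Inr ` {1..N - l} \<and> card I = k}. Gf W w I)"
    using abstract_identity[OF finW inj UW c2] unfolding WU .
  have L: "A_nr hbar mu N 1 k (\<lambda>p'. K_hat hbar mu N l p' q) p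
      = (\<Sum>I\<in>{I. I \<subseteq> {1..N} \<and> card I = k}. K * (-1) ^ (k * (N - l)) * Gf W w (Inl ` I))"
    unfolding A_nr_def sum_distrib_left K_def W_def w_def c_def
    by (rule sum.cong[OF refl], rule termL[OF hm _ _ nz]) auto
  also have "\<dots> = K * (-1) ^ (k * (N - l)) * (\<Sum>I\<in>{I. I \<subseteq> U \<and> card I = k}. Gf W w I)"
    unfolding U_def reindex_image_sets[OF inj_Inl] by (simp add: sum_distrib_left)
  finally have L: "A_nr hbar mu N 1 k (\<lambda>p'. K_hat hbar mu N l p' q) p = \<dots>" .
  have R: "A_nr hbar mu (N - l) (-1) k (\<lambda>q'. K_hat hbar mu N l p q') q
      = (\<Sum>J\<in>{J. J \<subseteq> {1..N - l} \<and> card J = k}. K * (-1) ^ (k * (N - l - k)) * Gf W w (Inr ` J))"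
    unfolding A_nr_def sum_distrib_left K_def W_def w_def c_def
    by (rule sum.cong[OF refl], rule termR[OF hm _ _ nz]) auto
  also have "\<dots> = K * (-1) ^ (k * (N - l - k)) * (\<Sum>I\<in>{I. I \<subseteq> Inr ` {1..N - l} \<and> card I = k}. Gf W w I)"
    unfolding reindex_image_sets[OF inj_Inr] by (simp add: sum_distrib_left)
  finally have R: "A_nr hbar mu (N - l) (-1) k (\<lambda>q'. K_hat hbar mu N l p q') q = \<dots>" .
  have sg: "(-1::complex) ^ (k * (N - l)) * (-1) ^ k = (-1) ^ (k * (N - l - k))"
    using sign_lemma assms(5) by blast
  show ?thesis unfolding L R abs using sg by (simp add: mult.assoc[symmetric])
qed


end
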